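(* Let $\Lambda\subset\mathbb Z^n$ be an orthogonal sublattice. Then $\Lambda$ is cubiquitous if and only if, up to a change of basis of $\mathbb Z^n$, $\Lambda$ admits a basis $\{b_1,\ldots,b_n\}$ such that the matrix $B=\begin{bmatrix} b_1&\cdots&b_n\end{bmatrix}$ is a block (diagonal) matrix each of whose blocks is one of $$\begin{bmatrix}1\end{bmatrix},\qquad \begin{bmatrix}2\end{bmatrix},\qquad \begin{bmatrix}1&-1\\1&1\end{bmatrix}.$$
   Context: $\mathbb Z^n$ carries the standard dot product $\langle\cdot,\cdot\rangle$ with standard basis $e_1,\ldots,e_n$. A "change of basis of $\mathbb Z^n$" means replacing the standard basis by another orthonormal basis, i.e. applying an automorphism of $\mathbb Z^n$ preserving the dot product (a signed permutation of coordinates). A sublattice $\Lambda\subset\mathbb Z^n$ is full-rank if $\mathrm{rank}\,\Lambda=n$. An orthogonal sublattice is a full-rank sublattice of $\mathbb Z^n$ admitting a basis of pairwise orthogonal vectors. A full-rank sublattice $\Lambda\subset\mathbb Z^n$ is cubiquitous if $\Lambda\cap(x+\{0,1\}^n)\neq\emptyset$ for every $x\in\mathbb Z^n$. *)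

theory Defs
  imports Main "HOL-Combinatorics.Permutations"
begin

text \<open>Vectors of Z^n are modelled as functions nat => int vanishing outside {0..<n}.\<close>

definition zvec :: "nat \<Rightarrow> (nat \<Rightarrow> int) set" where
  "zvec n = {v. \<forall>i\<ge>n. v i = 0}"

definition dot :: "nat \<Rightarrow> (nat \<Rightarrow> int) \<Rightarrow> (nat \<Rightarrow> int) \<Rightarrow> int" where
  "dot n u v = (\<Sum>k<n. u k * v k)"

definition lincomb :: "nat \<Rightarrow> (nat \<Rightarrow> int) \<Rightarrow> (nat \<Rightarrow> nat \<Rightarrow> int) \<Rightarrow> (nat \<Rightarrow> int)" where
  "lincomb n c b = (\<lambda>k. \<Sum>i<n. c i * b i k)"

definition lattice_basis :: "nat \<Rightarrow> (nat \<Rightarrow> int) set \<Rightarrow> (nat \<Rightarrow> nat \<Rightarrow> int) \<Rightarrow> bool" where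
  "lattice_basis n L b \<longleftrightarrow>
     (\<forall>i<n. b i \<in> zvec n) \<and>
     (\<forall>c. lincomb n c b = (\<lambda>_. 0) \<longrightarrow> (\<forall>i<n. c i = 0)) \<and>
     L = {lincomb n c b | c. True}"

definition full_rank_sublattice :: "nat \<Rightarrow> (nat \<Rightarrow> int) set \<Rightarrow> bool" where
  "full_rank_sublattice n L \<longleftrightarrow> L \<subseteq> zvec n \<and> (\<exists>b. lattice_basis n L b)"

definition orthogonal_sublattice :: "nat \<Rightarrow> (nat \<Rightarrow> int) set \<Rightarrow> bool" where
  "orthogonal_sublattice n L \<longleftrightarrow> L \<subseteq> zvec n \<and>
     (\<exists>b. lattice_basis n L b \<and> (\<forall>i<n. \<forall>j<n. i \<noteq> j \<longrightarrow> dot n (b i) (b j) = 0))"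

definition cubiquitous :: "nat \<Rightarrow> (nat \<Rightarrow> int) set \<Rightarrow> bool" where
  "cubiquitous n L \<longleftrightarrow> full_rank_sublattice n L \<and>
     (\<forall>x\<in>zvec n. \<exists>y\<in>L. \<forall>i<n. y i - x i \<in> {0, 1})"

text \<open>Signed permutation of coordinates (automorphism of Z^n preserving the dot product).\<close>
definition signed_perm :: "nat \<Rightarrow> (nat \<Rightarrow> nat) \<Rightarrow> (nat \<Rightarrow> int) \<Rightarrow> (nat \<Rightarrow> int) \<Rightarrow> (nat \<Rightarrow> int)" where
  "signed_perm n p s v = (\<lambda>i. if i < n then s i * v (p i) else 0)"

definition is_signed_perm :: "nat \<Rightarrow> (nat \<Rightarrow> nat) \<Rightarrow> (nat \<Rightarrow> int) \<Rightarrow> bool" where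
  "is_signed_perm n p s \<longleftrightarrow> p permutes {..<n} \<and> (\<forall>i<n. s i = 1 \<or> s i = -1)"

datatype blk = One | Two | Rot

fun bsize :: "blk \<Rightarrow> nat" where
  "bsize One = 1" | "bsize Two = 1" | "bsize Rot = 2"

fun bentry :: "blk \<Rightarrow> nat \<Rightarrow> nat \<Rightarrow> int" where
  "bentry One i j = 1"
| "bentry Two i j = 2"
| "bentry Rot i j = (if i = 0 \<and> j = 1 then -1 else 1)"

fun blockdiag :: "blk list \<Rightarrow> nat \<Rightarrow> nat \<Rightarrow> int" where
  "blockdiag [] i j = 0"
| "blockdiag (b # bs) i j =
     (if i < bsize b \<and> j < bsize b then bentry b i j
      else if bsize b \<le> i \<and> bsize b \<le> j then blockdiag bs (i - bsize b) (j - bsize b)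
      else 0)"

definition block_basis :: "nat \<Rightarrow> (nat \<Rightarrow> nat \<Rightarrow> int) \<Rightarrow> bool" where
  "block_basis n b \<longleftrightarrow> (\<exists>bs. sum_list (map bsize bs) = n \<and>
      (\<forall>i<n. \<forall>j<n. b j i = blockdiag bs i j))"

end

theory Submission
  imports Defs
begin

lemma sum_lessThan_add_split:
  "(\<Sum>j<a+(c::nat). (f j :: 'b::comm_monoid_add)) = (\<Sum>j<a. f j) + (\<Sum>j<c. f (a + j))"
  by (induction c) (auto simp: add.assoc)

lemma blockdiag_ge: "sum_list (map bsize bs) \<le> i \<Longrightarrow> blockdiag bs i j = 0"
  by (induction bs arbitrary: i j) auto

lemma block_cover_one:
  "\<exists>c0. \<forall>k<bsize a. (\<Sum>j<bsize a. c0 j * bentry a k j) - x k \<in> {0,1}"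
proof (cases a)
  case One
  then show ?thesis by (intro exI[of _ "\<lambda>_. x 0"]) auto
next
  case Two
  then show ?thesis by (intro exI[of _ "\<lambda>_. (x 0 + 1) div 2"]) auto
next
  case Rot
  define a' where "a' = x 0 + (if even (x 0 + x 1) then 0 else 1)"
  have ev: "even (a' + x 1)" unfolding a'_def by auto
  define c0 where "c0 = (\<lambda>j::nat. if j = 0 then (a' + x 1) div 2 else (x 1 - a') div 2)"
  have d1: "(a' + x 1) div 2 * 2 = a' + x 1" using ev by simp
  have d2: "(x 1 - a') div 2 * 2 = x 1 - a'" using ev by (simp add: even_diff)
  have e1: "c0 0 - c0 1 = a'" "c0 0 + c0 1 = x 1"
    unfolding c0_def using d1 d2 by auto
  have "\<forall>k<2. (\<Sum>j<2. c0 j * bentry Rot k j) - x k \<in> {0,1}"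
  proof (intro allI impI)
    fix k :: nat assume "k < 2"
    then have "k = 0 \<or> k = 1" by auto
    then show "(\<Sum>j<2. c0 j * bentry Rot k j) - x k \<in> {0,1}"
      using e1 by (auto simp: numeral_2_eq_2 a'_def)
  qed
  then show ?thesis using Rot by auto
qed

lemma block_cover:
  "\<exists>c. \<forall>k<sum_list (map bsize bs).
     (\<Sum>j<sum_list (map bsize bs). c j * blockdiag bs k j) - x k \<in> {0,1}"
proof (induction bs arbitrary: x)
  case Nil
  then show ?case by simp
next
  case (Cons a bs)
  define sz where "sz = bsize a"
  define N where "N = sum_list (map bsize bs)"
  obtain c' where c': "\<forall>k<N. (\<Sum>j<N. c' j * blockdiag bs k j) - x (k + sz) \<in> {0,1}"
    using Cons.IH[of "\<lambda>k. x (k + sz)"] unfolding N_def by blast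
  obtain c0 where c0: "\<forall>k<sz. (\<Sum>j<sz. c0 j * bentry a k j) - x k \<in> {0,1}"
    using block_cover_one[of a x] unfolding sz_def by blast
  define c where "c = (\<lambda>j. if j < sz then c0 j else c' (j - sz))"
  have "\<forall>k<sz + N. (\<Sum>j<sz + N. c j * blockdiag (a # bs) k j) - x k \<in> {0,1}"
  proof (intro allI impI)
    fix k assume k: "k < sz + N"
    have split: "(\<Sum>j<sz + N. c j * blockdiag (a # bs) k j) =
      (\<Sum>j<sz. c j * blockdiag (a # bs) k j) + (\<Sum>j<N. c (sz + j) * blockdiag (a # bs) k (sz + j))"
      by (rule sum_lessThan_add_split)
    show "(\<Sum>j<sz + N. c j * blockdiag (a # bs) k j) - x k \<in> {0,1}"
    proof (cases "k < sz")
      case True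
      have "(\<Sum>j<N. c (sz + j) * blockdiag (a # bs) k (sz + j)) = 0"
        using True by (auto simp: sz_def)
      moreover have "(\<Sum>j<sz. c j * blockdiag (a # bs) k j) = (\<Sum>j<sz. c0 j * bentry a k j)"
        using True by (intro sum.cong) (auto simp: sz_def c_def)
      ultimately show ?thesis using split c0 True by simp
    next
      case False
      have "(\<Sum>j<sz. c j * blockdiag (a # bs) k j) = 0"
        using False by (intro sum.neutral) (auto simp: sz_def)
      moreover have "(\<Sum>j<N. c (sz + j) * blockdiag (a # bs) k (sz + j)) =
          (\<Sum>j<N. c' j * blockdiag bs (k - sz) j)"
        using False by (intro sum.cong) (auto simp: sz_def c_def)
      moreover have "k - sz < N" using k False by auto
      ultimately show ?thesis using split c'[rule_format, of "k - sz"] False by simp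
    qed
  qed
  then show ?case unfolding sz_def N_def by auto
qed

lemma block_lattice_cover:
  assumes "lattice_basis n L b" "block_basis n b"
  shows "\<exists>y\<in>L. \<forall>k<n. y k - x k \<in> {0,1}"
proof -
  obtain bs where bs: "sum_list (map bsize bs) = n" "\<forall>i<n. \<forall>j<n. b j i = blockdiag bs i j"
    using assms(2) unfolding block_basis_def by blast
  obtain c where c: "\<forall>k<n. (\<Sum>j<n. c j * blockdiag bs k j) - x k \<in> {0,1}"
    using block_cover[of bs x] bs(1) by auto
  have "lincomb n c b \<in> L" using assms(1) unfolding lattice_basis_def by auto
  moreover have "\<forall>k<n. lincomb n c b k - x k \<in> {0,1}"
  proof (intro allI impI)
    fix k assume k: "k < n"
    have "lincomb n c b k = (\<Sum>j<n. c j * blockdiag bs k j)"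
      unfolding lincomb_def using bs(2) k by (intro sum.cong) auto
    then show "lincomb n c b k - x k \<in> {0,1}" using c k by simp
  qed
  ultimately show ?thesis by blast
qed

lemma signed_perm_cover_back:
  assumes sp: "is_signed_perm n p s"
    and cov: "\<And>x'. \<exists>y'\<in>signed_perm n p s ` L. \<forall>k<n. y' k - x' k \<in> {0,1}"
  shows "\<exists>y\<in>L. \<forall>k<n. y k - x k \<in> {0,1}"
proof -
  have perm: "p permutes {..<n}" and sgn: "\<forall>i<n. s i = 1 \<or> s i = -1"
    using sp unfolding is_signed_perm_def by auto
  define x' where "x' = (\<lambda>i. s i * x (p i) - (if s i = -1 then 1 else 0))"
  obtain y0 where y0: "y0 \<in> L" "\<forall>k<n. signed_perm n p s y0 k - x' k \<in> {0,1}"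
    using cov[of x'] by blast
  have "\<forall>i<n. y0 (p i) - x (p i) \<in> {0,1}"
  proof (intro allI impI)
    fix i assume i: "i < n"
    have h: "s i * y0 (p i) - x' i \<in> {0,1}" using y0(2) i unfolding signed_perm_def by auto
    show "y0 (p i) - x (p i) \<in> {0,1}"
      using sgn i h unfolding x'_def by auto
  qed
  moreover have "\<forall>k<n. \<exists>i<n. p i = k"
  proof (intro allI impI)
    fix k assume "k < n"
    then have "k \<in> p ` {..<n}" using permutes_image[OF perm] by simp
    then show "\<exists>i<n. p i = k" by auto
  qed
  ultimately show ?thesis using y0(1) by metis
qed

lemma backward:
  assumes "orthogonal_sublattice n L"
    and "is_signed_perm n p s" "lattice_basis n (signed_perm n p s ` L) b" "block_basis n b"
  shows "cubiquitous n L"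
proof -
  have "full_rank_sublattice n L"
    using assms(1) unfolding orthogonal_sublattice_def full_rank_sublattice_def by blast
  moreover have "\<forall>x\<in>zvec n. \<exists>y\<in>L. \<forall>i<n. y i - x i \<in> {0, 1}"
    using signed_perm_cover_back[OF assms(2) block_lattice_cover[OF assms(3,4)]] by blast
  ultimately show ?thesis unfolding cubiquitous_def by blast
qed

definition uv :: "nat \<Rightarrow> int \<Rightarrow> nat \<Rightarrow> int" where
  "uv j a = (\<lambda>k. if k = j then a else 0)"

lemma dot_uv: "j < n \<Longrightarrow> dot n (uv j a) v = a * v j"
proof -
  assume j: "j < n"
  have "dot n (uv j a) v = (\<Sum>k<n. if k = j then a * v k else 0)"
    unfolding dot_def by (rule sum.cong) (auto simp: uv_def)
  then show ?thesis using j by simp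
qed

lemma dot_add1: "dot n (\<lambda>k. x k + y k) v = dot n x v + dot n y v"
  unfolding dot_def by (simp add: algebra_simps sum.distrib)

lemma dot_comm: "dot n u v = dot n v u"
  unfolding dot_def by (simp add: mult.commute)

lemma dot_split: "dot n y v = dot n x v + dot n (\<lambda>k. y k - x k) v"
  using dot_add1[of n x "\<lambda>k. y k - x k" v] by simp

lemma lincomb_zvec: "\<forall>i<n. b i \<in> zvec n \<Longrightarrow> lincomb n c b \<in> zvec n"
  unfolding lincomb_def zvec_def by auto

lemma lincomb_diff: "lincomb n c b k - lincomb n c' b k = lincomb n (\<lambda>i. c i - c' i) b k"
  unfolding lincomb_def by (simp add: sum_subtractf algebra_simps)

locale ctx =
  fixes n :: nat and L :: "(nat \<Rightarrow> int) set" and b :: "nat \<Rightarrow> nat \<Rightarrow> int"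
  assumes basis: "lattice_basis n L b"
    and orth: "\<forall>i<n. \<forall>j<n. i \<noteq> j \<longrightarrow> dot n (b i) (b j) = 0"
    and cub: "\<forall>x\<in>zvec n. \<exists>y\<in>L. \<forall>i<n. y i - x i \<in> {0, 1}"
begin

definition m :: "nat \<Rightarrow> int" where "m l = dot n (b l) (b l)"

lemma bz: "i < n \<Longrightarrow> b i \<in> zvec n"
  using basis unfolding lattice_basis_def by auto

lemma bz': "i < n \<Longrightarrow> n \<le> k \<Longrightarrow> b i k = 0"
  using bz unfolding zvec_def by auto

lemma indep: "lincomb n c b = (\<lambda>_. 0) \<Longrightarrow> i < n \<Longrightarrow> c i = 0"
  using basis unfolding lattice_basis_def by auto

lemma L_eq: "L = {lincomb n c b | c. True}"
  using basis unfolding lattice_basis_def by auto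

lemma L_zvec: "y \<in> L \<Longrightarrow> y \<in> zvec n"
  using L_eq lincomb_zvec bz by auto

lemma b_nonzero: assumes "l < n" shows "\<exists>k<n. b l k \<noteq> 0"
proof (rule ccontr)
  assume "\<not> ?thesis"
  then have bl0: "b l = (\<lambda>_. 0)" using bz'[OF assms] by (auto simp: not_less)
  have "lincomb n (\<lambda>i. if i = l then 1 else 0) b = (\<lambda>_. 0)"
  proof (rule ext)
    fix k
    have "lincomb n (\<lambda>i. if i = l then 1 else 0) b k = (\<Sum>i<n. if i = l then b l k else 0)"
      unfolding lincomb_def by (rule sum.cong) auto
    then show "lincomb n (\<lambda>i. if i = l then 1 else 0) b k = 0"
      using assms bl0 by simp
  qed
  from indep[OF this assms] show False by simp
qed

lemma m_pos: assumes "l < n" shows "m l > 0"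
proof -
  obtain k where k: "k < n" "b l k \<noteq> 0" using b_nonzero[OF assms] by blast
  have "0 < (b l k)^2" using k by simp
  then have "0 < b l k * b l k" by (simp add: power2_eq_square)
  also have "\<dots> \<le> m l" unfolding m_def dot_def
    using k by (intro member_le_sum) auto
  finally show ?thesis .
qed

lemma dot_lincomb: assumes "l < n" shows "dot n (lincomb n c b) (b l) = c l * m l"
proof -
  have "dot n (lincomb n c b) (b l) = (\<Sum>k<n. \<Sum>i<n. c i * b i k * b l k)"
    unfolding dot_def lincomb_def by (simp add: sum_distrib_right)
  also have "\<dots> = (\<Sum>i<n. c i * dot n (b i) (b l))"
    unfolding dot_def by (subst sum.swap) (simp add: sum_distrib_left mult.assoc)
  also have "\<dots> = (\<Sum>i<n. if i = l then c l * m l else 0)"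
    using orth assms by (intro sum.cong) (auto simp: m_def)
  also have "\<dots> = c l * m l" using assms by simp
  finally show ?thesis .
qed

lemma m_dvd: assumes "y \<in> L" "l < n" shows "m l dvd dot n y (b l)"
  using assms dot_lincomb L_eq by auto

lemma multiple_unit: assumes j: "j < n" shows "\<exists>k>0. uv j k \<in> L"
proof -
  define xt where "xt = (\<lambda>t::nat. uv j (int t))"
  have xz: "xt t \<in> zvec n" for t using j unfolding xt_def uv_def zvec_def by auto
  have "\<forall>t. \<exists>y. y \<in> L \<and> (\<forall>i<n. y i - xt t i \<in> {0, 1})" using cub xz by blast
  then obtain Y where Y: "\<And>t. Y t \<in> L" "\<And>t i. i < n \<Longrightarrow> Y t i - xt t i \<in> {0,1}" by metis
  define D where "D = (\<lambda>t. {i. i < n \<and> Y t i - xt t i = 1})"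
  have "D ` UNIV \<subseteq> Pow {..<n}" unfolding D_def by auto
  then have "finite (D ` UNIV)" by (rule finite_subset) auto
  then have "\<not> inj D" using finite_imageD infinite_UNIV_nat by blast
  then obtain t1 t2 where t12: "t1 \<noteq> t2" "D t1 = D t2" unfolding inj_def by blast
  have eqd: "Y t1 i - xt t1 i = Y t2 i - xt t2 i" if "i < n" for i
  proof -
    have "Y t1 i - xt t1 i = 1 \<longleftrightarrow> Y t2 i - xt t2 i = 1"
      using t12(2) that unfolding D_def by blast
    then show ?thesis using Y(2)[OF that, of t1] Y(2)[OF that, of t2] by auto
  qed
  obtain c1 where c1: "Y t1 = lincomb n c1 b" using Y(1) L_eq by blast
  obtain c2 where c2: "Y t2 = lincomb n c2 b" using Y(1) L_eq by blast
  have gen: "\<exists>k>0. uv j k \<in> L" if "ta < tb" "Y ta = lincomb n ca b" "Y tb = lincomb n cb b"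
    "\<And>i. i < n \<Longrightarrow> Y ta i - xt ta i = Y tb i - xt tb i" for ta tb ca cb
  proof -
    have "uv j (int tb - int ta) = lincomb n (\<lambda>i. cb i - ca i) b"
    proof
      fix i
      show "uv j (int tb - int ta) i = lincomb n (\<lambda>i. cb i - ca i) b i"
      proof (cases "i < n")
        case True
        then show ?thesis using that(4)[OF True] that(2,3) lincomb_diff[of n cb b i ca]
          unfolding xt_def uv_def by (auto simp: algebra_simps)
      next
        case False
        then show ?thesis using j unfolding uv_def lincomb_def by (auto simp: bz')
      qed
    qed
    then have "uv j (int tb - int ta) \<in> L" using L_eq by auto
    then show ?thesis using that(1) by (intro exI[of _ "int tb - int ta"]) auto
  qed
  show ?thesis
  proof (cases "t1 < t2")
    case True
    then show ?thesis using gen[of t1 t2 c1 c2] c1 c2 eqd by auto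
  next
    case False
    then have "t2 < t1" using t12(1) by auto
    then show ?thesis using gen[of t2 t1 c2 c1] c1 c2 eqd by auto
  qed
qed

lemma identity: assumes j: "j < n"
  shows "\<exists>k>0. \<exists>c. (\<forall>l<n. c l * m l = k * b l j) \<and> (\<Sum>l<n. c l * b l j) = k"
proof -
  obtain k where k: "k > 0" "uv j k \<in> L" using multiple_unit[OF j] by blast
  obtain c where c: "uv j k = lincomb n c b" using k(2) L_eq by blast
  have "\<forall>l<n. c l * m l = k * b l j"
    using dot_lincomb[of _ c] dot_uv[OF j, of k] c by metis
  moreover have "(\<Sum>l<n. c l * b l j) = k"
    using fun_cong[OF c, of j] unfolding uv_def lincomb_def by simp
  ultimately show ?thesis using k(1) by blast
qed

end

lemma sq_abs_nonneg: "0 \<le> (v::int) * v - \<bar>v\<bar>"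
proof (cases "v \<ge> 0")
  case True
  then have "0 \<le> v * (v - 1) \<or> v = 0" by (cases "v = 0") auto
  then show ?thesis using True by (auto simp: algebra_simps)
next
  case False
  then have "0 \<le> (-v) * (-v - 1)" by (intro mult_nonneg_nonneg) auto
  then show ?thesis using False by (auto simp: algebra_simps)
qed

lemma shape_arith:
  fixes v :: "nat \<Rightarrow> int"
  assumes H: "\<And>j. j < n \<Longrightarrow> v j \<noteq> 0 \<Longrightarrow> (\<Sum>k<n. v k * v k - \<bar>v k\<bar>) \<le> \<bar>v j\<bar>"
  shows "(\<forall>k<n. \<bar>v k\<bar> \<le> 1) \<or> (\<exists>j<n. \<bar>v j\<bar> = 2 \<and> (\<forall>k<n. k \<noteq> j \<longrightarrow> v k = 0))"
proof -
  define f where "f k = v k * v k - \<bar>v k\<bar>" for k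
  have fnn: "0 \<le> f k" for k unfolding f_def by (rule sq_abs_nonneg)
  have one: "f k \<le> (\<Sum>k<n. f k)" if "k < n" for k
    using that fnn by (intro member_le_sum) auto
  have two: "f k + f k' \<le> (\<Sum>k<n. f k)" if "k < n" "k' < n" "k \<noteq> k'" for k k'
  proof -
    have "f k + f k' = (\<Sum>i\<in>{k,k'}. f i)" using that by simp
    also have "\<dots> \<le> (\<Sum>k<n. f k)" using that fnn by (intro sum_mono2) auto
    finally show ?thesis .
  qed
  have fv: "f k = \<bar>v k\<bar> * \<bar>v k\<bar> - \<bar>v k\<bar>" for k by (simp only: f_def abs_mult_self_eq)
  have le2: "\<bar>v k\<bar> \<le> 2" if "k < n" for k
  proof (rule ccontr)
    assume "\<not> ?thesis"
    then have a3: "\<bar>v k\<bar> \<ge> 3" by simp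
    then have "3 * \<bar>v k\<bar> \<le> \<bar>v k\<bar> * \<bar>v k\<bar>" by (intro mult_right_mono) auto
    then have "f k > \<bar>v k\<bar>" using a3 fv[of k] by linarith
    then show False using H[OF that] one[OF that] a3 unfolding f_def by force
  qed
  show ?thesis
  proof (cases "\<exists>k<n. \<bar>v k\<bar> = 2")
    case False
    have "\<forall>k<n. \<bar>v k\<bar> \<le> 1"
    proof (intro allI impI)
      fix k assume "k < n"
      then show "\<bar>v k\<bar> \<le> 1" using le2[of k] False by force
    qed
    then show ?thesis by blast
  next
    case True
    then obtain k0 where k0: "k0 < n" "\<bar>v k0\<bar> = 2" by blast
    have f0: "f k0 = 2" using fv[of k0] k0 by simp
    have "\<forall>k<n. k \<noteq> k0 \<longrightarrow> v k = 0"
    proof (intro allI impI)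
      fix k assume k: "k < n" "k \<noteq> k0"
      show "v k = 0"
      proof (rule ccontr)
        assume nz: "v k \<noteq> 0"
        then have "\<bar>v k\<bar> = 1 \<or> \<bar>v k\<bar> = 2" using le2[OF k(1)] by auto
        then obtain a where a: "\<bar>v k\<bar> = a" "a = 1 \<or> a = 2" by blast
        have "f k = a * a - a" by (simp only: fv a(1))
        then have "f k \<ge> 0" "\<bar>v k\<bar> < f k0 + f k" using a f0 by auto
        then show False using two[OF k0(1) k(1)] k(2) H[OF k(1) nz] unfolding f_def by force
      qed
    qed
    then show ?thesis using k0 by blast
  qed
qed

context ctx begin

definition negs :: "nat \<Rightarrow> int" where "negs l = (\<Sum>k<n. if b l k < 0 then - b l k else 0)"
definition poss :: "nat \<Rightarrow> int" where "poss l = (\<Sum>k<n. if b l k > 0 then b l k else 0)"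

lemma negs_nn: "0 \<le> negs l" unfolding negs_def by (intro sum_nonneg) auto

lemma cube_dot_bounds:
  assumes "\<forall>k<n. c k \<in> {0,1}"
  shows "- negs l \<le> dot n c (b l)" "dot n c (b l) \<le> poss l"
proof -
  have "(\<Sum>k<n. - (if b l k < 0 then - b l k else 0)) \<le> (\<Sum>k<n. c k * b l k)"
    using assms by (intro sum_mono) auto
  then show "- negs l \<le> dot n c (b l)" unfolding negs_def dot_def by (simp add: sum_negf)
  have "(\<Sum>k<n. c k * b l k) \<le> (\<Sum>k<n. if b l k > 0 then b l k else 0)"
    using assms by (intro sum_mono) auto
  then show "dot n c (b l) \<le> poss l" unfolding poss_def dot_def .
qed

lemma negs_poss: "negs l + poss l = (\<Sum>k<n. \<bar>b l k\<bar>)"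
  unfolding negs_def poss_def sum.distrib[symmetric] by (intro sum.cong) auto

lemma shape_bound:
  assumes l: "l < n" and j: "j < n" "b l j \<noteq> 0"
  shows "m l \<le> negs l + poss l + \<bar>b l j\<bar>"
proof (rule ccontr)
  assume big: "\<not> ?thesis"
  define a where "a = \<bar>b l j\<bar>"
  have apos: "a > 0" using j unfolding a_def by simp
  define q where "q = negs l div a + 1"
  have qa1: "q * a > negs l"
  proof -
    have "a * (negs l div a) + negs l mod a = negs l" by (rule mult_div_mod_eq)
    moreover have "negs l mod a < a" using apos by simp
    moreover have "q * a = a * (negs l div a) + a" by (simp add: q_def algebra_simps)
    ultimately show ?thesis by linarith
  qed
  have qa2: "q * a \<le> negs l + a"
  proof -
    have "a * (negs l div a) + negs l mod a = negs l" by (rule mult_div_mod_eq)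
    moreover have "negs l mod a \<ge> 0" using apos by simp
    moreover have "q * a = a * (negs l div a) + a" by (simp add: q_def algebra_simps)
    ultimately show ?thesis by linarith
  qed
  define x where "x = uv j (q * sgn (b l j))"
  have xz: "x \<in> zvec n" using j unfolding x_def uv_def zvec_def by auto
  have dx: "dot n x (b l) = q * a"
    unfolding x_def dot_uv[OF j(1)] a_def by (simp add: abs_sgn mult.assoc)
  obtain y where y: "y \<in> L" "\<forall>i<n. y i - x i \<in> {0,1}" using cub xz by blast
  have cb: "- negs l \<le> dot n (\<lambda>k. y k - x k) (b l)" "dot n (\<lambda>k. y k - x k) (b l) \<le> poss l"
    using cube_dot_bounds[of "\<lambda>k. y k - x k" l] y(2) by auto
  have dy: "dot n y (b l) = q * a + dot n (\<lambda>k. y k - x k) (b l)"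
    using dot_split[of n y "b l" x] dx by simp
  have pos: "dot n y (b l) > 0" using dy cb qa1 by linarith
  have lt: "dot n y (b l) < m l" using dy cb qa2 big unfolding a_def by linarith
  have "m l dvd dot n y (b l)" using m_dvd[OF y(1) l] .
  then have "m l \<le> dot n y (b l)" using pos by (simp add: zdvd_imp_le)
  then show False using lt by simp
qed

lemma m_sum: "m l = (\<Sum>k<n. b l k * b l k)" unfolding m_def dot_def ..

lemma shape:
  assumes l: "l < n"
  shows "(\<forall>k<n. \<bar>b l k\<bar> \<le> 1) \<or> (\<exists>j<n. \<bar>b l j\<bar> = 2 \<and> (\<forall>k<n. k \<noteq> j \<longrightarrow> b l k = 0))"
proof (rule shape_arith)
  fix j assume j: "j < n" "b l j \<noteq> 0"
  have "(\<Sum>k<n. b l k * b l k - \<bar>b l k\<bar>) = m l - (negs l + poss l)"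
    unfolding m_sum negs_poss sum_subtractf ..
  then show "(\<Sum>k<n. b l k * b l k - \<bar>b l k\<bar>) \<le> \<bar>b l j\<bar>"
    using shape_bound[OF l j] by simp
qed

end

lemma dvd_range: "(M::int) > 0 \<Longrightarrow> M dvd t \<Longrightarrow> 0 \<le> t \<Longrightarrow> t \<le> M \<Longrightarrow> t = 0 \<or> t = M"
  using zdvd_imp_le[of M t] by (cases "t = 0") auto

lemma sum_indicator_card: "(\<Sum>k<(n::nat). if P k then (1::int) else 0) = int (card {k. k < n \<and> P k})"
proof -
  have "(\<Sum>k<n. if P k then (1::int) else 0) = (\<Sum>k\<in>{k\<in>{..<n}. P k}. 1)"
    by (rule sum.inter_filter[symmetric]) simp
  also have "{k\<in>{..<n}. P k} = {k. k < n \<and> P k}" by auto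
  finally show ?thesis by simp
qed

lemma dot_single: "j < n \<Longrightarrow> \<forall>k<n. k \<noteq> j \<longrightarrow> u k = 0 \<Longrightarrow> dot n u v = u j * v j"
proof -
  assume j: "j < n" and u: "\<forall>k<n. k \<noteq> j \<longrightarrow> u k = 0"
  have "dot n u v = (\<Sum>k<n. if k = j then u j * v j else 0)"
    unfolding dot_def using u by (intro sum.cong) auto
  then show ?thesis using j by simp
qed

context ctx begin

definition pm :: "nat \<Rightarrow> bool" where "pm l \<longleftrightarrow> (\<forall>k<n. \<bar>b l k\<bar> \<le> 1)"
definition S :: "nat \<Rightarrow> nat set" where "S l = {k. k < n \<and> b l k \<noteq> 0}"

lemma pm_vals: "pm l \<Longrightarrow> k < n \<Longrightarrow> b l k \<noteq> 0 \<Longrightarrow> b l k = 1 \<or> b l k = -1"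
  unfolding pm_def by force

lemma pm_sq: "pm l \<Longrightarrow> k < n \<Longrightarrow> b l k * b l k = (if b l k = 0 then 0 else 1)"
  using pm_vals[of l k] by auto

lemma pm_m: "pm l \<Longrightarrow> m l = negs l + poss l"
proof -
  assume p: "pm l"
  have "b l k * b l k = \<bar>b l k\<bar>" if "k < n" for k
    using pm_vals[OF p that] by (cases "b l k = 0") auto
  then show ?thesis unfolding m_sum negs_poss by (intro sum.cong) auto
qed

lemma pm_m_card: "pm l \<Longrightarrow> m l = int (card (S l))"
proof -
  assume p: "pm l"
  have "m l = (\<Sum>k<n. if b l k \<noteq> 0 then (1::int) else 0)"
    unfolding m_sum using pm_sq[OF p] by (intro sum.cong) auto
  then show ?thesis unfolding S_def sum_indicator_card .
qed

lemma end_char: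
  assumes p: "pm l" and c: "\<forall>k<n. c k \<in> {0,1}"
    and d: "dot n c (b l) = - negs l \<or> dot n c (b l) = poss l"
  shows "\<exists>e. (e = 1 \<or> e = -1) \<and> (\<forall>k<n. b l k \<noteq> 0 \<longrightarrow> 2 * c k - 1 = e * b l k)"
  using d
proof
  assume d1: "dot n c (b l) = - negs l"
  define g where "g k = c k * b l k + (if b l k < 0 then - b l k else 0)" for k
  have gs: "(\<Sum>k<n. g k) = 0" using d1 unfolding g_def sum.distrib dot_def negs_def by simp
  have gnn: "0 \<le> g k" if "k \<in> {..<n}" for k using c that unfolding g_def by auto
  have "\<forall>k\<in>{..<n}. g k = 0" using sum_nonneg_eq_0_iff[of "{..<n}" g] gnn gs by simp
  then have "\<forall>k<n. b l k \<noteq> 0 \<longrightarrow> 2 * c k - 1 = (-1) * b l k"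
  proof (intro allI impI)
    fix k assume k: "k < n" "b l k \<noteq> 0"
    assume g0: "\<forall>k\<in>{..<n}. g k = 0"
    have g1: "g k = 0" using g0 k by auto
    have "c k = 0 \<or> c k = 1" using c k by auto
    moreover have "b l k = 1 \<or> b l k = -1" using pm_vals[OF p k] .
    ultimately show "2 * c k - 1 = (-1) * b l k" using g1 unfolding g_def by auto
  qed
  then show ?thesis by blast
next
  assume d1: "dot n c (b l) = poss l"
  define g where "g k = (if b l k > 0 then b l k else 0) - c k * b l k" for k
  have gs: "(\<Sum>k<n. g k) = 0" using d1 unfolding g_def sum_subtractf dot_def poss_def by simp
  have gnn: "0 \<le> g k" if "k \<in> {..<n}" for k using c that unfolding g_def by auto
  have "\<forall>k\<in>{..<n}. g k = 0" using sum_nonneg_eq_0_iff[of "{..<n}" g] gnn gs by simp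
  then have "\<forall>k<n. b l k \<noteq> 0 \<longrightarrow> 2 * c k - 1 = 1 * b l k"
  proof (intro allI impI)
    fix k assume k: "k < n" "b l k \<noteq> 0"
    assume g0: "\<forall>k\<in>{..<n}. g k = 0"
    have g1: "g k = 0" using g0 k by auto
    have "c k = 0 \<or> c k = 1" using c k by auto
    moreover have "b l k = 1 \<or> b l k = -1" using pm_vals[OF p k] .
    ultimately show "2 * c k - 1 = 1 * b l k" using g1 unfolding g_def by auto
  qed
  then show ?thesis by blast
qed

lemma tight_one:
  assumes p: "pm l" and l: "l < n" and y: "y \<in> L" and c: "\<forall>k<n. y k - x k \<in> {0,1}"
    and dx: "dot n x (b l) = negs l"
  shows "\<exists>e. (e = 1 \<or> e = -1) \<and> (\<forall>k<n. b l k \<noteq> 0 \<longrightarrow> 2 * (y k - x k) - 1 = e * b l k)"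
proof (rule end_char[OF p])
  show "\<forall>k<n. y k - x k \<in> {0,1}" by fact
  have cb: "- negs l \<le> dot n (\<lambda>k. y k - x k) (b l)" "dot n (\<lambda>k. y k - x k) (b l) \<le> poss l"
    using cube_dot_bounds[of "\<lambda>k. y k - x k" l] c by auto
  have dy: "dot n y (b l) = negs l + dot n (\<lambda>k. y k - x k) (b l)"
    using dot_split[of n y "b l" x] dx by simp
  have "dot n y (b l) = 0 \<or> dot n y (b l) = m l"
    using dvd_range[OF m_pos[OF l] m_dvd[OF y l]] dy cb pm_m[OF p] by linarith
  then show "dot n (\<lambda>k. y k - x k) (b l) = - negs l \<or> dot n (\<lambda>k. y k - x k) (b l) = poss l"
    using dy pm_m[OF p] by auto
qed

lemma tight:
  assumes l12: "l1 < n" "l2 < n" "l1 \<noteq> l2" and p: "pm l1" "pm l2"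
    and x: "x \<in> zvec n" "dot n x (b l1) = negs l1" "dot n x (b l2) = negs l2"
    and j: "j < n" "b l1 j \<noteq> 0" "b l2 j \<noteq> 0"
  shows False
proof -
  obtain y where y: "y \<in> L" "\<forall>i<n. y i - x i \<in> {0,1}" using cub x(1) by blast
  obtain e1 where e1: "e1 = 1 \<or> e1 = -1" "\<forall>k<n. b l1 k \<noteq> 0 \<longrightarrow> 2 * (y k - x k) - 1 = e1 * b l1 k"
    using tight_one[OF p(1) l12(1) y x(2)] by blast
  obtain e2 where e2: "e2 = 1 \<or> e2 = -1" "\<forall>k<n. b l2 k \<noteq> 0 \<longrightarrow> 2 * (y k - x k) - 1 = e2 * b l2 k"
    using tight_one[OF p(2) l12(2) y x(3)] by blast
  define t where "t k = (e1 * b l1 k) * (e2 * b l2 k)" for k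
  have tv: "t k = (if b l1 k \<noteq> 0 \<and> b l2 k \<noteq> 0 then 1 else 0)" if k: "k < n" for k
  proof (cases "b l1 k \<noteq> 0 \<and> b l2 k \<noteq> 0")
    case True
    have a1: "e1 * b l1 k = 2 * (y k - x k) - 1" using e1(2) k True by auto
    have a2: "e2 * b l2 k = 2 * (y k - x k) - 1" using e2(2) k True by auto
    have "t k = (2 * (y k - x k) - 1) * (2 * (y k - x k) - 1)"
      by (simp only: t_def a1 a2)
    moreover have "y k - x k = 0 \<or> y k - x k = 1" using y(2) k by blast
    moreover have h: "(2 * d - 1) * (2 * d - 1) = 1" if "d = 0 \<or> d = 1" for d :: int
      using that by auto
    ultimately show ?thesis using True by (simp only: h) simp
  next
    case False
    then show ?thesis unfolding t_def by auto
  qed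
  have "(\<Sum>k<n. t k) = e1 * e2 * dot n (b l1) (b l2)"
    unfolding t_def dot_def sum_distrib_left by (intro sum.cong) (auto simp: algebra_simps)
  also have "\<dots> = 0" using orth l12 by simp
  finally have s0: "(\<Sum>k<n. t k) = 0" .
  have "t j \<le> (\<Sum>k<n. t k)" using j tv by (intro member_le_sum) auto
  then show False using s0 tv[OF j(1)] j by simp
qed

lemma same_supp:
  assumes l12: "l1 < n" "l2 < n" "l1 \<noteq> l2" and p: "pm l1" "pm l2"
    and j: "j < n" "b l1 j \<noteq> 0" "b l2 j \<noteq> 0"
    and j0: "j0 < n" "b l1 j0 \<noteq> 0"
  shows "b l2 j0 \<noteq> 0"
proof
  assume z: "b l2 j0 = 0"
  have jj: "j \<noteq> j0" using z j by auto
  define \<alpha> where "\<alpha> = negs l2 * b l2 j"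
  define \<beta> where "\<beta> = b l1 j0 * (negs l1 - \<alpha> * b l1 j)"
  define x where "x = (\<lambda>k. uv j \<alpha> k + uv j0 \<beta> k)"
  have xz: "x \<in> zvec n" using j j0 unfolding x_def uv_def zvec_def by auto
  have sq1: "b l1 j0 * b l1 j0 = 1" using pm_sq[OF p(1) j0(1)] j0 by simp
  have sq2: "b l2 j * b l2 j = 1" using pm_sq[OF p(2) j(1)] j by simp
  have d1a: "dot n x (b l1) = \<alpha> * b l1 j + \<beta> * b l1 j0"
    unfolding x_def dot_add1 dot_uv[OF j(1)] dot_uv[OF j0(1)] ..
  have d1b: "\<beta> * b l1 j0 = (b l1 j0 * b l1 j0) * (negs l1 - \<alpha> * b l1 j)"
    unfolding \<beta>_def by (simp only: ac_simps)
  have d1: "dot n x (b l1) = negs l1" using d1a d1b sq1 by simp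
  have d2a: "dot n x (b l2) = \<alpha> * b l2 j + \<beta> * b l2 j0"
    unfolding x_def dot_add1 dot_uv[OF j(1)] dot_uv[OF j0(1)] ..
  have d2b: "\<alpha> * b l2 j = negs l2 * (b l2 j * b l2 j)"
    unfolding \<alpha>_def by (simp only: ac_simps)
  have d2: "dot n x (b l2) = negs l2" using d2a d2b sq2 z by simp
  show False using tight[OF l12 p xz d1 d2 j] .
qed

lemma parity_case:
  assumes l12: "l1 < n" "l2 < n" "l1 \<noteq> l2" and p: "pm l1" "pm l2"
    and ss: "\<forall>k<n. b l1 k \<noteq> 0 \<longleftrightarrow> b l2 k \<noteq> 0"
    and j: "j < n" "b l1 j \<noteq> 0"
    and ev: "even (negs l1 + negs l2)"
  shows False
proof -
  define t where "t k = b l1 k * b l2 k" for k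
  have tv: "t k \<in> {-1,0,1}" if "k < n" for k
  proof (cases "b l1 k = 0 \<or> b l2 k = 0")
    case True
    then show ?thesis unfolding t_def by auto
  next
    case False
    then show ?thesis using pm_vals[OF p(1) that] pm_vals[OF p(2) that] unfolding t_def by auto
  qed
  have t0: "(\<Sum>k<n. t k) = 0" using orth l12 unfolding t_def dot_def by simp
  have tj: "t j \<noteq> 0" using j ss unfolding t_def by simp
  have ex: "\<exists>k<n. t k = 1" "\<exists>k<n. t k = -1"
  proof -
    have "t j = 1 \<or> t j = -1" using tv[OF j(1)] tj by auto
    then show "\<exists>k<n. t k = 1" "\<exists>k<n. t k = -1"
    proof (safe)
      assume "t j = 1"
      show "\<exists>k<n. t k = 1" using \<open>t j = 1\<close> j by blast
      show "\<exists>k<n. t k = -1"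
      proof (rule ccontr)
        assume "\<not> ?thesis"
        then have "\<forall>k\<in>{..<n}. 0 \<le> t k" using tv by fastforce
        then have "t j \<le> (\<Sum>k<n. t k)" using j by (intro member_le_sum) auto
        then show False using t0 \<open>t j = 1\<close> by simp
      qed
    next
      assume "t j = -1"
      show "\<exists>k<n. t k = -1" using \<open>t j = -1\<close> j by blast
      show "\<exists>k<n. t k = 1"
      proof (rule ccontr)
        assume "\<not> ?thesis"
        then have "\<forall>k\<in>{..<n}. t k \<le> 0" using tv by fastforce
        then have "- t j \<le> (\<Sum>k<n. - t k)" using j
          by (intro member_le_sum) auto
        then show False using t0 \<open>t j = -1\<close> by (simp add: sum_negf)
      qed
    qed
  qed
  obtain ja where ja: "ja < n" "t ja = 1" using ex(1) by blast
  obtain jb where jb: "jb < n" "t jb = -1" using ex(2) by blast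
  have jab: "ja \<noteq> jb" using ja jb by auto
  have nza: "b l1 ja \<noteq> 0" using ja unfolding t_def by auto
  have nzb: "b l1 jb \<noteq> 0" using jb unfolding t_def by auto
  have sqa: "b l1 ja * b l1 ja = 1" using pm_sq[OF p(1) ja(1)] nza by simp
  have sqb: "b l1 jb * b l1 jb = 1" using pm_sq[OF p(1) jb(1)] nzb by simp
  define u where "u = (negs l1 + negs l2) div 2"
  define v where "v = (negs l1 - negs l2) div 2"
  have uv1: "u + v = negs l1" "u - v = negs l2"
  proof -
    have e2: "even (negs l1 - negs l2)" using ev by (simp add: even_diff)
    have "u * 2 = negs l1 + negs l2" using ev unfolding u_def by simp
    moreover have "v * 2 = negs l1 - negs l2" using e2 unfolding v_def by simp
    ultimately show "u + v = negs l1" "u - v = negs l2" by linarith+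
  qed
  define x where "x = (\<lambda>k. uv ja (u * b l1 ja) k + uv jb (v * b l1 jb) k)"
  have xz: "x \<in> zvec n" using ja jb unfolding x_def uv_def zvec_def by auto
  have d1a: "dot n x (b l1) = u * (b l1 ja * b l1 ja) + v * (b l1 jb * b l1 jb)"
    unfolding x_def dot_add1 dot_uv[OF ja(1)] dot_uv[OF jb(1)] by (simp only: ac_simps)
  have d1: "dot n x (b l1) = negs l1" using d1a sqa sqb uv1 by simp
  have d2a: "dot n x (b l2) = u * t ja + v * t jb"
    unfolding x_def dot_add1 dot_uv[OF ja(1)] dot_uv[OF jb(1)] t_def by (simp only: ac_simps)
  have d2: "dot n x (b l2) = negs l2" using d2a ja(2) jb(2) uv1 by simp
  have j2: "b l2 ja \<noteq> 0" using ja unfolding t_def by auto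
  show False using tight[OF l12 p xz d1 d2 ja(1) nza j2] .
qed

end

context ctx begin

lemma nonpm_shape: "l < n \<Longrightarrow> \<not> pm l \<Longrightarrow> \<exists>j<n. \<bar>b l j\<bar> = 2 \<and> (\<forall>k<n. k \<noteq> j \<longrightarrow> b l k = 0)"
  using shape unfolding pm_def by blast

lemma S_eq_iff: "S i = S i' \<longleftrightarrow> (\<forall>k<n. b i k \<noteq> 0 \<longleftrightarrow> b i' k \<noteq> 0)"
  unfolding S_def by auto

lemma nonpm_excl:
  assumes i: "i < n" "\<not> pm i" and i0: "i0 < n" and j: "j < n" "b i j \<noteq> 0" "b i0 j \<noteq> 0"
  shows "i0 = i"
proof (rule ccontr)
  assume ne: "i0 \<noteq> i"
  obtain j' where j': "j' < n" "\<bar>b i j'\<bar> = 2" "\<forall>k<n. k \<noteq> j' \<longrightarrow> b i k = 0"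
    using nonpm_shape[OF i] by blast
  have "j' = j" using j' j by auto
  then have "dot n (b i) (b i0) = b i j * b i0 j" using dot_single[OF j(1)] j' by auto
  then have "dot n (b i) (b i0) \<noteq> 0" using j by simp
  then show False using orth i i0 ne by auto
qed

lemma supp_rel:
  assumes i: "i < n" and i0: "i0 < n" and j: "j < n" "b i j \<noteq> 0" "b i0 j \<noteq> 0"
  shows "i = i0 \<or> (pm i \<and> pm i0 \<and> S i = S i0)"
proof (cases "i = i0")
  case False
  have p: "pm i" "pm i0" using nonpm_excl[OF i _ i0 j] nonpm_excl[OF i0 _ i j(1,3,2)] False by auto
  have "\<forall>k<n. b i k \<noteq> 0 \<longleftrightarrow> b i0 k \<noteq> 0"
    using same_supp[OF i i0 False p j] same_supp[OF i0 i _ p(2,1) j(1,3,2)] False by blast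
  then show ?thesis using p S_eq_iff by blast
qed simp

definition T :: "nat \<Rightarrow> nat set" where "T j = {i. i < n \<and> b i j \<noteq> 0}"

lemma card_T:
  assumes p: "pm i0" and i0: "i0 < n" and j: "j < n" "b i0 j \<noteq> 0"
  shows "card (T j) = card (S i0)"
proof -
  obtain k c where k: "k > 0" and c: "\<forall>l<n. c l * m l = k * b l j" "(\<Sum>l<n. c l * b l j) = k"
    using identity[OF j(1)] by blast
  have "m i0 * (c l * b l j) = (if b l j \<noteq> 0 then k else 0)" if l: "l < n" for l
  proof (cases "b l j = 0")
    case False
    have "m l = m i0"
    proof (cases "l = i0")
      case False': False
      then have "pm l" "S l = S i0" using supp_rel[OF l i0 j(1) False j(2)] by auto
      then show ?thesis using pm_m_card p by metis
    qed simp
    then have "m i0 * (c l * b l j) = k * (b l j * b l j)" using c(1) l by (metis mult.assoc mult.commute)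
    also have "\<dots> = k"
    proof -
      have "pm l" using supp_rel[OF l i0 j(1) False j(2)] p by auto
      then show ?thesis using pm_sq[of l j] j False by simp
    qed
    finally show ?thesis using False by simp
  qed simp
  note h = this
  have "m i0 * k = m i0 * (\<Sum>l<n. c l * b l j)" using c(2) by simp
  also have "\<dots> = (\<Sum>l<n. m i0 * (c l * b l j))" by (simp add: sum_distrib_left)
  also have "\<dots> = (\<Sum>l<n. if b l j \<noteq> 0 then k else 0)" by (rule sum.cong) (auto simp: h)
  also have "\<dots> = (\<Sum>l<n. k * (if b l j \<noteq> 0 then 1 else 0))" by (rule sum.cong) auto
  also have "\<dots> = k * (\<Sum>l<n. if b l j \<noteq> 0 then 1 else 0)" by (simp only: sum_distrib_left)
  also have "\<dots> = k * int (card (T j))" unfolding T_def sum_indicator_card ..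
  finally have "m i0 = int (card (T j))" using k by simp
  then show ?thesis using pm_m_card[OF p] by simp
qed

lemma card_S_le2:
  assumes p: "pm i0" and i0: "i0 < n"
  shows "card (S i0) \<le> 2"
proof (rule ccontr)
  assume "\<not> ?thesis"
  then have c3: "card (S i0) \<ge> 3" by simp
  obtain j where j: "j < n" "b i0 j \<noteq> 0" using b_nonzero[OF i0] by blast
  have cT: "card (T j) \<ge> 3" using card_T[OF p i0 j] c3 by simp
  have fin: "finite (T j)" unfolding T_def by auto
  have i0T: "i0 \<in> T j" using i0 j unfolding T_def by auto
  have "card (T j - {i0}) \<ge> 2" using cT i0T fin by (simp add: card_Diff_singleton)
  then obtain i1 where i1: "i1 \<in> T j" "i1 \<noteq> i0"
    by (metis Diff_iff card.empty empty_iff insertI1 not_numeral_le_zero subsetI subset_antisym)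
  have "card (T j - {i0, i1}) \<ge> 1"
  proof -
    have "card (T j - {i0, i1}) = card (T j) - card {i0, i1}"
      using fin i0T i1 by (intro card_Diff_subset) auto
    then show ?thesis using cT i1(2) by simp
  qed
  then obtain i2 where i2: "i2 \<in> T j" "i2 \<noteq> i0" "i2 \<noteq> i1"
    by (metis Diff_iff card.empty insertCI le_numeral_extra(2) ex_in_conv)
  have mem: "\<And>i. i \<in> T j \<Longrightarrow> i < n \<and> b i j \<noteq> 0" unfolding T_def by auto
  have rel: "pm i \<and> S i = S i0" if "i \<in> T j" for i
    using supp_rel[of i i0 j] mem[OF that] i0 j p by auto
  have pair: False if "a \<in> T j" "c \<in> T j" "a \<noteq> c" "even (negs a + negs c)" for a c
  proof -
    have "S a = S c" using rel[OF that(1)] rel[OF that(2)] by simp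
    then have ss: "\<forall>k<n. b a k \<noteq> 0 \<longleftrightarrow> b c k \<noteq> 0" using S_eq_iff by blast
    show False using parity_case[OF _ _ that(3) _ _ ss j(1) _ that(4)] mem[OF that(1)] mem[OF that(2)]
        rel[OF that(1)] rel[OF that(2)] by blast
  qed
  have "even (negs i0 + negs i1) \<or> even (negs i0 + negs i2) \<or> even (negs i1 + negs i2)"
    by auto
  then show False using pair i0T i1 i2 by metis
qed

lemma T_nonempty: "j < n \<Longrightarrow> \<exists>i<n. b i j \<noteq> 0"
proof (rule ccontr)
  assume j: "j < n" and "\<not> (\<exists>i<n. b i j \<noteq> 0)"
  then have z: "\<forall>i<n. b i j = 0" by auto
  obtain k c where k: "k > 0" and c: "(\<Sum>l<n. c l * b l j) = k"
    using identity[OF j] by blast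
  have "(\<Sum>l<n. c l * b l j) = 0" using z by simp
  then show False using k c by simp
qed

lemma S_sub: "S i \<subseteq> {..<n}" unfolding S_def by auto
lemma S_fin: "finite (S i)" using S_sub finite_subset by blast
lemma S_ne: "i < n \<Longrightarrow> S i \<noteq> {}" using b_nonzero unfolding S_def by auto

lemma S_disj: "i < n \<Longrightarrow> i' < n \<Longrightarrow> S i = S i' \<or> S i \<inter> S i' = {}"
  using supp_rel unfolding S_def by blast

lemma S_card: "i < n \<Longrightarrow> card (S i) = 1 \<or> card (S i) = 2"
proof -
  assume i: "i < n"
  have "card (S i) > 0" using S_ne[OF i] S_fin by (simp add: card_gt_0_iff)
  moreover have "card (S i) \<le> 2"
  proof (cases "pm i")
    case True then show ?thesis using card_S_le2 i by blast
  next
    case False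
    obtain j where j: "j < n" "\<bar>b i j\<bar> = 2" "\<forall>k<n. k \<noteq> j \<longrightarrow> b i k = 0"
      using nonpm_shape[OF i False] by blast
    have "S i = {j}" using j unfolding S_def by auto
    then show ?thesis by simp
  qed
  ultimately show ?thesis by linarith
qed

lemma nonpm_S: "i < n \<Longrightarrow> \<not> pm i \<Longrightarrow> \<exists>j. S i = {j} \<and> \<bar>b i j\<bar> = 2"
proof -
  assume i: "i < n" "\<not> pm i"
  obtain j where j: "j < n" "\<bar>b i j\<bar> = 2" "\<forall>k<n. k \<noteq> j \<longrightarrow> b i k = 0"
    using nonpm_shape[OF i] by blast
  have "S i = {j}" using j unfolding S_def by auto
  then show ?thesis using j by blast
qed

lemma class_card: "i < n \<Longrightarrow> card {i'. i' < n \<and> S i' = S i} = card (S i)"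
proof -
  assume i: "i < n"
  obtain j where j: "j < n" "b i j \<noteq> 0" using b_nonzero[OF i] by blast
  have jS: "j \<in> S i" using j unfolding S_def by auto
  have eq: "{i'. i' < n \<and> S i' = S i} = T j"
  proof (intro set_eqI iffI)
    fix i' assume "i' \<in> {i'. i' < n \<and> S i' = S i}"
    then show "i' \<in> T j" using jS unfolding T_def S_def by auto
  next
    fix i' assume "i' \<in> T j"
    then have "i' < n" "b i' j \<noteq> 0" unfolding T_def by auto
    then show "i' \<in> {i'. i' < n \<and> S i' = S i}" using supp_rel[of i' i j] i j by auto
  qed
  show ?thesis
  proof (cases "pm i")
    case True
    then show ?thesis using eq card_T[OF True i j] by simp
  next
    case False
    have "T j = {i}"
    proof (intro set_eqI iffI)
      fix i' assume "i' \<in> T j"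
      then show "i' \<in> {i}" using nonpm_excl[OF i False, of i' j] j unfolding T_def by auto
    next
      fix i' assume "i' \<in> {i}" then show "i' \<in> T j" using i j unfolding T_def by auto
    qed
    moreover obtain j' where "S i = {j'}" using nonpm_S[OF i False] by blast
    ultimately show ?thesis using eq by simp
  qed
qed

lemma card2_pm: "i < n \<Longrightarrow> card (S i) = 2 \<Longrightarrow> pm i"
  using nonpm_S by fastforce

end

lemma sp_lincomb:
  "signed_perm n p s (lincomb n c b) = lincomb n c (\<lambda>i. signed_perm n p s (b i))"
proof (rule ext)
  fix k
  show "signed_perm n p s (lincomb n c b) k = lincomb n c (\<lambda>i. signed_perm n p s (b i)) k"
  proof (cases "k < n")
    case True
    then show ?thesis unfolding signed_perm_def lincomb_def
      by (simp add: sum_distrib_left algebra_simps)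
  next
    case False
    then show ?thesis unfolding signed_perm_def lincomb_def by simp
  qed
qed

lemma lattice_basis_signed_perm:
  assumes B: "lattice_basis n L b" and sp: "is_signed_perm n p s"
  shows "lattice_basis n (signed_perm n p s ` L) (\<lambda>i. signed_perm n p s (b i))"
proof -
  have perm: "p permutes {..<n}" and sg: "\<forall>i<n. s i = 1 \<or> s i = -1"
    using sp unfolding is_signed_perm_def by auto
  have bz: "\<forall>i<n. b i \<in> zvec n" and ind: "\<forall>c. lincomb n c b = (\<lambda>_. 0) \<longrightarrow> (\<forall>i<n. c i = 0)"
    and Leq: "L = {lincomb n c b | c. True}" using B unfolding lattice_basis_def by auto
  have z: "\<forall>i<n. signed_perm n p s (b i) \<in> zvec n" unfolding zvec_def signed_perm_def by auto
  have ind2: "\<forall>c. lincomb n c (\<lambda>i. signed_perm n p s (b i)) = (\<lambda>_. 0) \<longrightarrow> (\<forall>i<n. c i = 0)"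
  proof (rule allI, rule impI)
    fix c assume h: "lincomb n c (\<lambda>i. signed_perm n p s (b i)) = (\<lambda>_. 0)"
    have h2: "signed_perm n p s (lincomb n c b) = (\<lambda>_. 0)" using h sp_lincomb by metis
    have "lincomb n c b = (\<lambda>_. 0)"
    proof (rule ext)
      fix k show "lincomb n c b k = 0"
      proof (cases "k < n")
        case True
        then have "k \<in> p ` {..<n}" using permutes_image[OF perm] by simp
        then obtain i where i: "i < n" "p i = k" by auto
        have "s i * lincomb n c b (p i) = 0" using fun_cong[OF h2, of i] i unfolding signed_perm_def by simp
        then show ?thesis using sg i by auto
      next
        case False
        then show ?thesis using lincomb_zvec[OF bz, of c] unfolding zvec_def by auto
      qed
    qed
    then show "\<forall>i<n. c i = 0" using ind by blast
  qed
  have "signed_perm n p s ` L = {lincomb n c (\<lambda>i. signed_perm n p s (b i)) | c. True}"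
    unfolding Leq
  proof (intro set_eqI iffI)
    fix v assume "v \<in> signed_perm n p s ` {lincomb n c b | c. True}"
    then show "v \<in> {lincomb n c (\<lambda>i. signed_perm n p s (b i)) | c. True}" using sp_lincomb by auto
  next
    fix v assume "v \<in> {lincomb n c (\<lambda>i. signed_perm n p s (b i)) | c. True}"
    then obtain c where "v = lincomb n c (\<lambda>i. signed_perm n p s (b i))" by auto
    then have "v = signed_perm n p s (lincomb n c b)" using sp_lincomb by metis
    then show "v \<in> signed_perm n p s ` {lincomb n c b | c. True}" by auto
  qed
  then show ?thesis unfolding lattice_basis_def using z ind2 by blast
qed

lemma lattice_basis_reindex:
  assumes B: "lattice_basis n L b" and pi: "bij_betw \<pi> {..<n} {..<n}"
    and e: "\<forall>i<n. e i = 1 \<or> e i = -1"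
  shows "lattice_basis n L (\<lambda>i k. e i * b (\<pi> i) k)"
proof -
  define \<pi>' where "\<pi>' = inv_into {..<n} \<pi>"
  have inj: "inj_on \<pi> {..<n}" using pi bij_betw_def by blast
  have pp: "\<pi>' (\<pi> i) = i" if "i < n" for i unfolding \<pi>'_def using inv_into_f_f[OF inj] that by simp
  have pin: "\<pi> i < n" if "i < n" for i using pi that bij_betwE by blast
  have ee: "e i * e i = 1" if "i < n" for i using e that by auto
  have bz: "\<forall>i<n. b i \<in> zvec n" and ind: "\<forall>c. lincomb n c b = (\<lambda>_. 0) \<longrightarrow> (\<forall>i<n. c i = 0)"
    and Leq: "L = {lincomb n c b | c. True}" using B unfolding lattice_basis_def by auto
  define b2 where "b2 = (\<lambda>i k. e i * b (\<pi> i) k)"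
  have l1: "lincomb n c b2 = lincomb n (\<lambda>l. c (\<pi>' l) * e (\<pi>' l)) b" for c
  proof (rule ext)
    fix k
    have "lincomb n (\<lambda>l. c (\<pi>' l) * e (\<pi>' l)) b k = (\<Sum>l<n. c (\<pi>' l) * e (\<pi>' l) * b l k)"
      unfolding lincomb_def ..
    also have "\<dots> = (\<Sum>i<n. c (\<pi>' (\<pi> i)) * e (\<pi>' (\<pi> i)) * b (\<pi> i) k)"
      using sum.reindex_bij_betw[OF pi, of "\<lambda>l. c (\<pi>' l) * e (\<pi>' l) * b l k"] by simp
    also have "\<dots> = lincomb n c b2 k"
      unfolding lincomb_def b2_def by (intro sum.cong) (auto simp: pp mult.assoc)
    finally show "lincomb n c b2 k = lincomb n (\<lambda>l. c (\<pi>' l) * e (\<pi>' l)) b k" ..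
  qed
  have l2: "lincomb n c b = lincomb n (\<lambda>i. c (\<pi> i) * e i) b2" for c
  proof (rule ext)
    fix k
    have "lincomb n c b k = (\<Sum>i<n. c (\<pi> i) * b (\<pi> i) k)"
      unfolding lincomb_def using sum.reindex_bij_betw[OF pi, of "\<lambda>l. c l * b l k"] by simp
    also have "\<dots> = lincomb n (\<lambda>i. c (\<pi> i) * e i) b2 k"
      unfolding lincomb_def b2_def
    proof (intro sum.cong refl)
      fix i assume "i \<in> {..<n}"
      then have "e i * e i = 1" using ee by simp
      then show "c (\<pi> i) * b (\<pi> i) k = c (\<pi> i) * e i * (e i * b (\<pi> i) k)"
        by (metis mult.assoc mult.commute mult_1)
    qed
    finally show "lincomb n c b k = lincomb n (\<lambda>i. c (\<pi> i) * e i) b2 k" .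
  qed
  have z: "\<forall>i<n. b2 i \<in> zvec n" using bz pin unfolding b2_def zvec_def by auto
  have ind2: "\<forall>c. lincomb n c b2 = (\<lambda>_. 0) \<longrightarrow> (\<forall>i<n. c i = 0)"
  proof (intro allI impI)
    fix c i assume h: "lincomb n c b2 = (\<lambda>_. 0)" and i: "i < n"
    have "\<forall>l<n. c (\<pi>' l) * e (\<pi>' l) = 0" using ind h l1 by metis
    then have "c i * e i = 0" using pin[OF i] pp[OF i] by metis
    then show "c i = 0" using e i by auto
  qed
  have "L = {lincomb n c b2 | c. True}" unfolding Leq using l1 l2 by blast
  then show ?thesis using z ind2 unfolding lattice_basis_def b2_def by blast
qed

fun bidx :: "nat list \<Rightarrow> nat \<Rightarrow> nat" where
  "bidx [] i = 0"
| "bidx (a # as) i = (if i < a then 0 else Suc (bidx as (i - a)))"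

fun boff :: "nat list \<Rightarrow> nat \<Rightarrow> nat" where
  "boff [] i = i"
| "boff (a # as) i = (if i < a then i else boff as (i - a))"

lemma bidx_bound: "i < sum_list xs \<Longrightarrow> bidx xs i < length xs \<and> boff xs i < xs ! bidx xs i"
  by (induction xs arbitrary: i) auto

lemma nth_concat_bidx:
  "i < length (concat xss) \<Longrightarrow>
   concat xss ! i = xss ! bidx (map length xss) i ! boff (map length xss) i"
  by (induction xss arbitrary: i) (auto simp: nth_append)

lemma length_concat_sum: "length (concat xss) = sum_list (map length xss)"
  by (induction xss) auto

lemma blockdiag_char:
  "i < sum_list (map bsize bs) \<Longrightarrow> j < sum_list (map bsize bs) \<Longrightarrow>
   blockdiag bs i j = (if bidx (map bsize bs) i = bidx (map bsize bs) j
      then bentry (bs ! bidx (map bsize bs) i) (boff (map bsize bs) i) (boff (map bsize bs) j) else 0)"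
  by (induction bs arbitrary: i j) auto

lemma distinct_concat_map:
  assumes "distinct xs" "\<And>x. x \<in> set xs \<Longrightarrow> distinct (f x)"
    "\<And>x y. x \<in> set xs \<Longrightarrow> y \<in> set xs \<Longrightarrow> x \<noteq> y \<Longrightarrow> set (f x) \<inter> set (f y) = {}"
  shows "distinct (concat (map f xs))"
  using assms
proof (induction xs)
  case (Cons a xs)
  have d: "distinct (concat (map f xs))" using Cons by auto
  have "a \<notin> set xs" using Cons.prems(1) by simp
  then have "set (f a) \<inter> set (concat (map f xs)) = {}"
    using Cons.prems(3) by fastforce
  then show ?case using d Cons.prems(2) by auto
qed simp

lemma dot_two:
  assumes "c0 \<noteq> c1" "c0 < n" "c1 < n" "\<forall>k<n. k \<noteq> c0 \<and> k \<noteq> c1 \<longrightarrow> u k = 0"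
  shows "dot n u v = u c0 * v c0 + u c1 * v c1"
proof -
  have "dot n u v = (\<Sum>k\<in>{c0, c1}. u k * v k)"
    unfolding dot_def using assms by (intro sum.mono_neutral_right) auto
  then show ?thesis using assms(1) by simp
qed

context ctx begin

definition BB where "BB = S ` {..<n}"
definition BL where "BL = (SOME xs. set xs = BB \<and> distinct xs)"
definition cls where "cls \<beta> = {i. i < n \<and> S i = \<beta>}"
definition co where "co \<beta> = sorted_list_of_set \<beta>"
definition ve where "ve \<beta> = sorted_list_of_set (cls \<beta>)"
definition kd where "kd \<beta> = (if card \<beta> = 2 then Rot else if pm (ve \<beta> ! 0) then One else Two)"

lemma BL: "set BL = BB" "distinct BL"
proof -
  have "finite BB" unfolding BB_def by simp
  then have "\<exists>xs. set xs = BB \<and> distinct xs" using finite_distinct_list by blast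
  then have "set BL = BB \<and> distinct BL" unfolding BL_def by (rule someI_ex)
  then show "set BL = BB" "distinct BL" by auto
qed

lemma nz_iff: "i < n \<Longrightarrow> b i k \<noteq> 0 \<longleftrightarrow> k \<in> S i"
  unfolding S_def using bz' by (cases "k < n") auto

lemma blk_facts:
  assumes "\<beta> \<in> set BL"
  shows "set (co \<beta>) = \<beta>" "distinct (co \<beta>)" "length (co \<beta>) = card \<beta>"
    "set (ve \<beta>) = cls \<beta>" "distinct (ve \<beta>)" "length (ve \<beta>) = card \<beta>"
    "card \<beta> = 1 \<or> card \<beta> = 2" "bsize (kd \<beta>) = card \<beta>" "\<beta> \<subseteq> {..<n}"
    "\<And>i. i \<in> cls \<beta> \<Longrightarrow> i < n \<and> S i = \<beta>"
proof -
  obtain i0 where i0: "i0 < n" "\<beta> = S i0" using assms BL(1) unfolding BB_def by auto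
  have fb: "finite \<beta>" using i0 S_fin by simp
  have fc: "finite (cls \<beta>)" unfolding cls_def by auto
  show "set (co \<beta>) = \<beta>" "distinct (co \<beta>)" "length (co \<beta>) = card \<beta>"
    unfolding co_def using fb by auto
  show "set (ve \<beta>) = cls \<beta>" "distinct (ve \<beta>)"
    unfolding ve_def using fc by auto
  have "cls \<beta> = {i'. i' < n \<and> S i' = S i0}" unfolding cls_def i0 ..
  then have "card (cls \<beta>) = card \<beta>" using class_card[OF i0(1)] i0 by simp
  then show "length (ve \<beta>) = card \<beta>" unfolding ve_def using fc by simp
  show c12: "card \<beta> = 1 \<or> card \<beta> = 2" using S_card[OF i0(1)] i0 by simp
  then show "bsize (kd \<beta>) = card \<beta>" unfolding kd_def by auto
  show "\<beta> \<subseteq> {..<n}" using i0 S_sub by simp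
  show "\<And>i. i \<in> cls \<beta> \<Longrightarrow> i < n \<and> S i = \<beta>" unfolding cls_def by auto
qed

lemma BL_disj: "\<beta> \<in> set BL \<Longrightarrow> \<beta>' \<in> set BL \<Longrightarrow> \<beta> \<noteq> \<beta>' \<Longrightarrow> \<beta> \<inter> \<beta>' = {}"
  using S_disj BL(1) unfolding BB_def by auto

definition SZ where "SZ = map card BL"
definition bs where "bs = map kd BL"
definition ps where "ps = concat (map co BL)"
definition vs where "vs = concat (map ve BL)"

lemma map_lengths: "map length (map co BL) = SZ" "map length (map ve BL) = SZ" "map bsize bs = SZ"
  unfolding SZ_def bs_def using blk_facts by (auto intro!: map_cong)

lemma ps_set: "set ps = {..<n}"
proof
  show "set ps \<subseteq> {..<n}" unfolding ps_def using blk_facts(1,9) by auto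
  show "{..<n} \<subseteq> set ps"
  proof
    fix j assume "j \<in> {..<n}"
    then obtain i where i: "i < n" "b i j \<noteq> 0" using T_nonempty by auto
    then have "j \<in> S i" using nz_iff by auto
    moreover have "S i \<in> set BL" using BL(1) i unfolding BB_def by auto
    ultimately show "j \<in> set ps" unfolding ps_def using blk_facts(1) by auto
  qed
qed

lemma vs_set: "set vs = {..<n}"
proof
  show "set vs \<subseteq> {..<n}" unfolding vs_def using blk_facts(4) by (auto simp: cls_def)
  show "{..<n} \<subseteq> set vs"
  proof
    fix i assume "i \<in> {..<n}"
    then have "i \<in> cls (S i)" "S i \<in> set BL" using BL(1) unfolding BB_def cls_def by auto
    then show "i \<in> set vs" unfolding vs_def using blk_facts(4) by auto
  qed
qed

lemma ps_dist: "distinct ps"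
  unfolding ps_def
proof (rule distinct_concat_map[OF BL(2)])
  show "\<And>x. x \<in> set BL \<Longrightarrow> distinct (co x)" using blk_facts(2) .
  show "\<And>x y. x \<in> set BL \<Longrightarrow> y \<in> set BL \<Longrightarrow> x \<noteq> y \<Longrightarrow> set (co x) \<inter> set (co y) = {}"
    using blk_facts(1) BL_disj by auto
qed

lemma vs_dist: "distinct vs"
  unfolding vs_def
proof (rule distinct_concat_map[OF BL(2)])
  show "\<And>x. x \<in> set BL \<Longrightarrow> distinct (ve x)" using blk_facts(5) .
  show "\<And>x y. x \<in> set BL \<Longrightarrow> y \<in> set BL \<Longrightarrow> x \<noteq> y \<Longrightarrow> set (ve x) \<inter> set (ve y) = {}"
    using blk_facts(4) unfolding cls_def by auto
qed

lemma lens: "length ps = n" "length vs = n" "sum_list SZ = n"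
proof -
  show lp: "length ps = n" using distinct_card[OF ps_dist] ps_set by simp
  show "length vs = n" using distinct_card[OF vs_dist] vs_set by simp
  show "sum_list SZ = n" using lp length_concat_sum[of "map co BL"] map_lengths(1)
    unfolding ps_def by simp
qed

lemma pos:
  assumes q: "q < n"
  shows "bidx SZ q < length BL" "boff SZ q < card (BL ! bidx SZ q)"
    "ps ! q = co (BL ! bidx SZ q) ! boff SZ q" "vs ! q = ve (BL ! bidx SZ q) ! boff SZ q"
proof -
  have bb: "bidx SZ q < length SZ \<and> boff SZ q < SZ ! bidx SZ q" using bidx_bound[of q SZ] q lens(3) by simp
  then show k: "bidx SZ q < length BL" unfolding SZ_def by simp
  show "boff SZ q < card (BL ! bidx SZ q)" using bb k unfolding SZ_def by simp
  show "ps ! q = co (BL ! bidx SZ q) ! boff SZ q"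
    using nth_concat_bidx[of q "map co BL"] q lens(1) map_lengths(1) k unfolding ps_def by simp
  show "vs ! q = ve (BL ! bidx SZ q) ! boff SZ q"
    using nth_concat_bidx[of q "map ve BL"] q lens(2) map_lengths(2) k unfolding vs_def by simp
qed

definition pp where "pp q = (if q < n then ps ! q else q)"
definition r0 where "r0 \<beta> = ve \<beta> ! 0"
definition j0 where "j0 \<beta> = co \<beta> ! 0"
definition sg where "sg q = sgn (b (r0 (BL ! bidx SZ q)) (ps ! q))"
definition ee where "ee q = (let \<beta> = BL ! bidx SZ q in
   if boff SZ q = 0 then 1 else - (b (r0 \<beta>) (j0 \<beta>) * b (ve \<beta> ! 1) (j0 \<beta>)))"

lemma ve_cls: "\<beta> \<in> set BL \<Longrightarrow> t < card \<beta> \<Longrightarrow> ve \<beta> ! t < n \<and> S (ve \<beta> ! t) = \<beta>"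
proof -
  assume B: "\<beta> \<in> set BL" and t: "t < card \<beta>"
  have "ve \<beta> ! t \<in> set (ve \<beta>)" using blk_facts(6)[OF B] t by (intro nth_mem) simp
  then have "ve \<beta> ! t \<in> cls \<beta>" using blk_facts(4)[OF B] by simp
  then show ?thesis using blk_facts(10)[OF B] by blast
qed

lemma co_mem: "\<beta> \<in> set BL \<Longrightarrow> t < card \<beta> \<Longrightarrow> co \<beta> ! t \<in> \<beta>"
proof -
  assume B: "\<beta> \<in> set BL" and t: "t < card \<beta>"
  have "co \<beta> ! t \<in> set (co \<beta>)" using blk_facts(3)[OF B] t by (intro nth_mem) simp
  then show ?thesis using blk_facts(1)[OF B] by simp
qed

lemma pp_perm: "pp permutes {..<n}"
proof (rule bij_imp_permutes)
  have h: "bij_betw ((!) ps) {..<n} {..<n}"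
    by (rule bij_betw_nth[OF ps_dist]) (simp_all add: lens(1) ps_set)
  have "bij_betw pp {..<n} {..<n} = bij_betw ((!) ps) {..<n} {..<n}"
    by (rule bij_betw_cong) (simp add: pp_def)
  then show "bij_betw pp {..<n} {..<n}" using h by simp
  show "\<And>x. x \<notin> {..<n} \<Longrightarrow> pp x = x" unfolding pp_def by simp
qed

lemma pv_bij: "bij_betw ((!) vs) {..<n} {..<n}"
  by (rule bij_betw_nth[OF vs_dist]) (simp_all add: lens(2) vs_set)

lemma Bq: "q < n \<Longrightarrow> BL ! bidx SZ q \<in> set BL" using pos(1) by simp

lemma sg_pm: "q < n \<Longrightarrow> sg q = 1 \<or> sg q = -1"
proof -
  assume q: "q < n"
  define \<beta> where "\<beta> = BL ! bidx SZ q"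
  have B: "\<beta> \<in> set BL" using Bq[OF q] unfolding \<beta>_def .
  have c0: "0 < card \<beta>" using pos(2)[OF q] unfolding \<beta>_def by simp
  have r: "r0 \<beta> < n" "S (r0 \<beta>) = \<beta>" using ve_cls[OF B c0] unfolding r0_def by auto
  have "ps ! q \<in> \<beta>" using co_mem[OF B pos(2)[OF q, folded \<beta>_def]] pos(3)[OF q] unfolding \<beta>_def by simp
  then have "b (r0 \<beta>) (ps ! q) \<noteq> 0" using nz_iff[OF r(1)] r(2) by simp
  then show ?thesis unfolding sg_def \<beta>_def[symmetric] by (simp add: sgn_if)
qed

lemma ee_pm: "q < n \<Longrightarrow> ee q = 1 \<or> ee q = -1"
proof -
  assume q: "q < n"
  define \<beta> where "\<beta> = BL ! bidx SZ q"
  have B: "\<beta> \<in> set BL" using Bq[OF q] unfolding \<beta>_def .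
  show ?thesis
  proof (cases "boff SZ q = 0")
    case True then show ?thesis unfolding ee_def by simp
  next
    case False
    have "boff SZ q < card \<beta>" using pos(2)[OF q] unfolding \<beta>_def .
    then have c2: "card \<beta> = 2" using blk_facts(7)[OF B] False by auto
    have v0: "r0 \<beta> < n" "S (r0 \<beta>) = \<beta>" using ve_cls[OF B] c2 unfolding r0_def by auto
    have v1: "ve \<beta> ! 1 < n" "S (ve \<beta> ! 1) = \<beta>" using ve_cls[OF B] c2 by auto
    have p0: "pm (r0 \<beta>)" using card2_pm v0 c2 by simp
    have p1: "pm (ve \<beta> ! 1)" using card2_pm v1 c2 by simp
    have jm: "j0 \<beta> \<in> \<beta>" "j0 \<beta> < n" using co_mem[OF B, of 0] c2 blk_facts(9)[OF B] unfolding j0_def by auto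
    have a: "b (r0 \<beta>) (j0 \<beta>) = 1 \<or> b (r0 \<beta>) (j0 \<beta>) = -1"
      using pm_vals[OF p0 jm(2)] nz_iff[OF v0(1)] v0(2) jm(1) by simp
    have d: "b (ve \<beta> ! 1) (j0 \<beta>) = 1 \<or> b (ve \<beta> ! 1) (j0 \<beta>) = -1"
      using pm_vals[OF p1 jm(2)] nz_iff[OF v1(1)] v1(2) jm(1) by simp
    show ?thesis using a d False unfolding ee_def Let_def \<beta>_def[symmetric] by auto
  qed
qed

end

context ctx begin

lemma entry:
  assumes q: "q < n" and r: "r < n"
  shows "ee r * (sg q * b (vs ! r) (ps ! q)) =
    (if bidx SZ q = bidx SZ r then bentry (kd (BL ! bidx SZ q)) (boff SZ q) (boff SZ r) else 0)"
proof (cases "bidx SZ q = bidx SZ r")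
  case False
  define \<beta> where "\<beta> = BL ! bidx SZ q"
  define \<gamma> where "\<gamma> = BL ! bidx SZ r"
  have B: "\<beta> \<in> set BL" "\<gamma> \<in> set BL" using Bq q r unfolding \<beta>_def \<gamma>_def by auto
  have ne: "\<beta> \<noteq> \<gamma>" using False BL(2) pos(1)[OF q] pos(1)[OF r] unfolding \<beta>_def \<gamma>_def
    by (simp add: nth_eq_iff_index_eq)
  have pq: "ps ! q \<in> \<beta>" using co_mem[OF B(1) pos(2)[OF q, folded \<beta>_def]] pos(3)[OF q] unfolding \<beta>_def by simp
  have vr: "vs ! r < n" "S (vs ! r) = \<gamma>" using ve_cls[OF B(2) pos(2)[OF r, folded \<gamma>_def]] pos(4)[OF r]
    unfolding \<gamma>_def by auto
  have "ps ! q \<notin> \<gamma>" using BL_disj[OF B ne] pq by auto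
  then have "b (vs ! r) (ps ! q) = 0" using nz_iff[OF vr(1), of "ps ! q"] vr(2) by blast
  then show ?thesis using False by simp
next
  case True
  define \<beta> where "\<beta> = BL ! bidx SZ q"
  define Oq where "Oq = boff SZ q"
  define Or where "Or = boff SZ r"
  have B: "\<beta> \<in> set BL" using Bq q unfolding \<beta>_def by auto
  have oq: "Oq < card \<beta>" using pos(2)[OF q] unfolding \<beta>_def Oq_def .
  have or: "Or < card \<beta>" using pos(2)[OF r] True unfolding \<beta>_def Or_def by simp
  have psq: "ps ! q = co \<beta> ! Oq" using pos(3)[OF q] unfolding \<beta>_def Oq_def .
  have vsr: "vs ! r = ve \<beta> ! Or" using pos(4)[OF r] True unfolding \<beta>_def Or_def by simp
  have sgq: "sg q = sgn (b (r0 \<beta>) (co \<beta> ! Oq))" unfolding sg_def \<beta>_def[symmetric] psq ..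
  have eer: "ee r = (if Or = 0 then 1 else - (b (r0 \<beta>) (j0 \<beta>) * b (ve \<beta> ! 1) (j0 \<beta>)))"
    unfolding ee_def Let_def True[symmetric] \<beta>_def[symmetric] Or_def ..
  have rhs: "(if bidx SZ q = bidx SZ r then bentry (kd (BL ! bidx SZ q)) (boff SZ q) (boff SZ r) else 0)
     = bentry (kd \<beta>) Oq Or" using True unfolding \<beta>_def Oq_def Or_def by simp
  have v0: "r0 \<beta> < n" "S (r0 \<beta>) = \<beta>" using ve_cls[OF B, of 0] oq unfolding r0_def by auto
  have cm: "co \<beta> ! Oq \<in> \<beta>" using co_mem[OF B oq] .
  have sub: "\<beta> \<subseteq> {..<n}" using blk_facts(9)[OF B] .
  show ?thesis unfolding rhs psq vsr sgq eer
  proof (cases "card \<beta> = 2")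
    case False
    then have c1: "card \<beta> = 1" using blk_facts(7)[OF B] by auto
    then have z: "Oq = 0" "Or = 0" using oq or by auto
    have x: "b (r0 \<beta>) (co \<beta> ! 0) \<noteq> 0" using cm z nz_iff[OF v0(1)] v0(2) by simp
    have val: "sgn (b (r0 \<beta>) (co \<beta> ! 0)) * b (r0 \<beta>) (co \<beta> ! 0) = \<bar>b (r0 \<beta>) (co \<beta> ! 0)\<bar>"
      by (simp add: abs_sgn)
    show "(if Or = 0 then 1 else - (b (r0 \<beta>) (j0 \<beta>) * b (ve \<beta> ! 1) (j0 \<beta>))) *
        (sgn (b (r0 \<beta>) (co \<beta> ! Oq)) * b (ve \<beta> ! Or) (co \<beta> ! Oq)) = bentry (kd \<beta>) Oq Or"
    proof (cases "pm (r0 \<beta>)")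
      case True
      have kd: "kd \<beta> = One" unfolding kd_def using False True unfolding r0_def by simp
      have "co \<beta> ! 0 < n" using cm z sub by auto
      then have "b (r0 \<beta>) (co \<beta> ! 0) = 1 \<or> b (r0 \<beta>) (co \<beta> ! 0) = -1"
        using pm_vals[OF True _ x] by blast
      then have "\<bar>b (r0 \<beta>) (co \<beta> ! 0)\<bar> = 1" by auto
      then show ?thesis using z val kd unfolding r0_def by simp
    next
      case np: False
      have kd: "kd \<beta> = Two" unfolding kd_def using False np unfolding r0_def by simp
      obtain j where j: "S (r0 \<beta>) = {j}" "\<bar>b (r0 \<beta>) j\<bar> = 2" using nonpm_S[OF v0(1) np] by blast
      have "co \<beta> ! 0 = j" using cm z j(1) v0(2) by simp
      then have "\<bar>b (r0 \<beta>) (co \<beta> ! 0)\<bar> = 2" using j by simp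
      then show ?thesis using z val kd unfolding r0_def by simp
    qed
  next
    case c2: True
    have kd: "kd \<beta> = Rot" unfolding kd_def using c2 by simp
    define l1 where "l1 = ve \<beta> ! 0"
    define l2 where "l2 = ve \<beta> ! 1"
    define c0 where "c0 = co \<beta> ! 0"
    define c1 where "c1 = co \<beta> ! 1"
    have l1p: "l1 < n" "S l1 = \<beta>" using ve_cls[OF B, of 0] c2 unfolding l1_def by auto
    have l2p: "l2 < n" "S l2 = \<beta>" using ve_cls[OF B, of 1] c2 unfolding l2_def by auto
    have l12: "l1 \<noteq> l2" using blk_facts(5,6)[OF B] c2 unfolding l1_def l2_def
      by (simp add: nth_eq_iff_index_eq)
    have c01: "c0 \<noteq> c1" using blk_facts(2,3)[OF B] c2 unfolding c0_def c1_def
      by (simp add: nth_eq_iff_index_eq)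
    have c0m: "c0 \<in> \<beta>" using co_mem[OF B, of 0] c2 unfolding c0_def by simp
    have c1m: "c1 \<in> \<beta>" using co_mem[OF B, of 1] c2 unfolding c1_def by simp
    have beq: "\<beta> = {c0, c1}"
    proof -
      have "{c0, c1} \<subseteq> \<beta>" using c0m c1m by auto
      moreover have "card {c0, c1} = card \<beta>" using c01 c2 by simp
      ultimately show ?thesis using S_fin l1p(2) by (metis card_subset_eq)
    qed
    have pm1: "pm l1" using card2_pm l1p c2 by simp
    have pm2: "pm l2" using card2_pm l2p c2 by simp
    have nz: "b l k \<noteq> 0" if "l = l1 \<or> l = l2" "k = c0 \<or> k = c1" for l k
      using that nz_iff l1p l2p beq by auto
    have vals: "b l k = 1 \<or> b l k = -1" if "l = l1 \<or> l = l2" "k = c0 \<or> k = c1" for l k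
      using pm_vals[OF _ _ nz[OF that]] that pm1 pm2 sub c0m c1m by auto
    have orth12: "b l1 c0 * b l2 c0 + b l1 c1 * b l2 c1 = 0"
    proof -
      have "dot n (b l1) (b l2) = 0" using orth l1p(1) l2p(1) l12 by simp
      moreover have "dot n (b l1) (b l2) = b l1 c0 * b l2 c0 + b l1 c1 * b l2 c1"
      proof (rule dot_two[OF c01])
        show "c0 < n" "c1 < n" using sub c0m c1m by auto
        show "\<forall>k<n. k \<noteq> c0 \<and> k \<noteq> c1 \<longrightarrow> b l1 k = 0" using nz_iff[OF l1p(1)] l1p(2) beq by auto
      qed
      ultimately show ?thesis by simp
    qed
    have r0e: "r0 \<beta> = l1" "j0 \<beta> = c0" unfolding r0_def l1_def j0_def c0_def by auto
    have oq2: "Oq = 0 \<or> Oq = 1" "Or = 0 \<or> Or = 1" using oq or c2 by auto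
    have coq: "co \<beta> ! Oq = (if Oq = 0 then c0 else c1)" using oq2 unfolding c0_def c1_def by auto
    have ver: "ve \<beta> ! Or = (if Or = 0 then l1 else l2)" using oq2 unfolding l1_def l2_def by auto
    have a0: "b l1 c0 = 1 \<or> b l1 c0 = -1" using vals by simp
    have a1: "b l1 c1 = 1 \<or> b l1 c1 = -1" using vals by simp
    have d0: "b l2 c0 = 1 \<or> b l2 c0 = -1" using vals by simp
    have d1: "b l2 c1 = 1 \<or> b l2 c1 = -1" using vals by simp
    show "(if Or = 0 then 1 else - (b (r0 \<beta>) (j0 \<beta>) * b (ve \<beta> ! 1) (j0 \<beta>))) *
        (sgn (b (r0 \<beta>) (co \<beta> ! Oq)) * b (ve \<beta> ! Or) (co \<beta> ! Oq)) = bentry (kd \<beta>) Oq Or"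
      unfolding r0e coq ver kd l2_def[symmetric]
      using oq2 a0 a1 d0 d1 orth12 by (elim disjE) auto
  qed
qed

theorem forward:
  "\<exists>p s. is_signed_perm n p s \<and>
       (\<exists>b'. lattice_basis n (signed_perm n p s ` L) b' \<and> block_basis n b')"
proof (intro exI conjI)
  show sp: "is_signed_perm n pp sg" unfolding is_signed_perm_def using pp_perm sg_pm by blast
  define b1 where "b1 = (\<lambda>i. signed_perm n pp sg (b i))"
  have lb1: "lattice_basis n (signed_perm n pp sg ` L) b1"
    unfolding b1_def by (rule lattice_basis_signed_perm[OF basis sp])
  show "lattice_basis n (signed_perm n pp sg ` L) (\<lambda>i k. ee i * b1 ((!) vs i) k)"
    by (rule lattice_basis_reindex[OF lb1 pv_bij]) (use ee_pm in blast)
  show "block_basis n (\<lambda>i k. ee i * b1 ((!) vs i) k)"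
    unfolding block_basis_def
  proof (intro exI conjI allI impI)
    show "sum_list (map bsize bs) = n" using map_lengths(3) lens(3) by simp
    fix q r assume q: "q < n" and r: "r < n"
    have vr: "vs ! r < n" using vs_set r lens(2) nth_mem by (metis lessThan_iff)
    have "ee r * b1 (vs ! r) q = ee r * (sg q * b (vs ! r) (ps ! q))"
      unfolding b1_def signed_perm_def pp_def using q by simp
    also have "\<dots> = blockdiag bs q r"
      unfolding entry[OF q r] using blockdiag_char[of q bs r] map_lengths(3) lens(3) q r
      unfolding bs_def using pos(1)[OF r] by simp
    finally show "ee r * b1 ((!) vs r) q = blockdiag bs q r" .
  qed
qed

end


theorem theorem1p5:
  fixes n :: nat and L :: "(nat \<Rightarrow> int) set"
  assumes "orthogonal_sublattice n L"
  shows "cubiquitous n L \<longleftrightarrow>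
    (\<exists>p s. is_signed_perm n p s \<and>
       (\<exists>b. lattice_basis n (signed_perm n p s ` L) b \<and> block_basis n b))"
proof
  assume cu: "cubiquitous n L"
  obtain b where b: "lattice_basis n L b" "\<forall>i<n. \<forall>j<n. i \<noteq> j \<longrightarrow> dot n (b i) (b j) = 0"
    using assms unfolding orthogonal_sublattice_def by blast
  have c: "\<forall>x\<in>zvec n. \<exists>y\<in>L. \<forall>i<n. y i - x i \<in> {0, 1}" using cu unfolding cubiquitous_def by blast
  interpret ctx n L b using b c by unfold_locales
  show "\<exists>p s. is_signed_perm n p s \<and>
       (\<exists>b. lattice_basis n (signed_perm n p s ` L) b \<and> block_basis n b)" by (rule forward)
next
  assume "\<exists>p s. is_signed_perm n p s \<and>
       (\<exists>b. lattice_basis n (signed_perm n p s ` L) b \<and> block_basis n b)"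
  then obtain p s b' where "is_signed_perm n p s" "lattice_basis n (signed_perm n p s ` L) b'"
    "block_basis n b'" by blast
  then show "cubiquitous n L" using backward[OF assms] by blast
qed

end
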